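(* Let $TT_n$ be the transitive tournament on $n$ vertices and let $(\alpha_1,\alpha_2)\in\mathbb{Z}^2$ with $\alpha_1\alpha_2<0$, $|\alpha_1|\neq|\alpha_2|$ and $|\alpha_1|+|\alpha_2|=n-1$. Then the number of oriented paths of type $P(\alpha_1,\alpha_2)$ in $TT_n$ is $\binom{n-1}{|\alpha_1|}$.
   Context: The transitive tournament $TT_n$ has vertices $v_1,\dots,v_n$ and arcs $(v_i,v_j)$ for all $i<j$. An oriented path is a digraph whose underlying graph is a path; a block is a maximal directed subpath. An oriented path $P$ is of type $P(\alpha_1,\alpha_2)$ if $P$ is the concatenation of two blocks $I_1,I_2$, where $I_i$ has ends $x_i,y_i$, $I_1\cap I_2=\{y_1\}=\{x_2\}$, $I_i$ has length $|\alpha_i|$, and $\alpha_i>0$ iff $I_i$ is directed from $x_i$ to $y_i$. Paths are counted as distinct when their arc sets differ. *)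

theory Defs
  imports Main
begin

definition TT_arcs :: "nat \<Rightarrow> (nat \<times> nat) set" where
  "TT_arcs n = {(i, j). 1 \<le> i \<and> i < j \<and> j \<le> n}"

text \<open>An oriented path in TT_n is given by its vertex sequence xs (distinct vertices of TT_n);
  its arc set consists of the arcs of TT_n between consecutive vertices.\<close>
definition path_arcs :: "nat list \<Rightarrow> (nat \<times> nat) set" where
  "path_arcs xs = {(min (xs ! k) (xs ! Suc k), max (xs ! k) (xs ! Suc k)) | k. Suc k < length xs}"

definition step_ok :: "int \<Rightarrow> nat \<Rightarrow> nat \<Rightarrow> bool" where
  "step_ok a u w \<longleftrightarrow> (a > 0 \<and> u < w) \<or> (a < 0 \<and> w < u)"

text \<open>xs traverses a path of type P(a1,a2) in TT_n: first block x_1 = xs!0 .. y_1 = xs!|a1|,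
  second block x_2 = y_1 .. y_2 = last xs, of lengths |a1|, |a2|, with directions given by
  the signs of a1, a2.  Blocks are maximal iff the signs differ (a1 * a2 < 0).\<close>
definition type_P_seq :: "nat \<Rightarrow> int \<Rightarrow> int \<Rightarrow> nat list \<Rightarrow> bool" where
  "type_P_seq n a1 a2 xs \<longleftrightarrow>
     a1 * a2 < 0 \<and>
     length xs = nat \<bar>a1\<bar> + nat \<bar>a2\<bar> + 1 \<and> distinct xs \<and> set xs \<subseteq> {1..n} \<and>
     (\<forall>k < nat \<bar>a1\<bar>. step_ok a1 (xs ! k) (xs ! Suc k)) \<and>
     (\<forall>k. nat \<bar>a1\<bar> \<le> k \<and> k < nat \<bar>a1\<bar> + nat \<bar>a2\<bar> \<longrightarrow> step_ok a2 (xs ! k) (xs ! Suc k))"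

text \<open>Paths of type P(a1,a2) in TT_n, counted by their arc sets.\<close>
definition type_P_paths :: "nat \<Rightarrow> int \<Rightarrow> int \<Rightarrow> (nat \<times> nat) set set" where
  "type_P_paths n a1 a2 = {path_arcs xs | xs. type_P_seq n a1 a2 xs}"

end

theory Submission
  imports Defs
begin

definition valid :: "nat \<Rightarrow> nat \<Rightarrow> nat \<Rightarrow> nat list \<Rightarrow> bool" where
  "valid n p q xs \<longleftrightarrow> length xs = n \<and> distinct xs \<and> set xs \<subseteq> {1..n} \<and>
     (\<forall>k<p. xs!k < xs!Suc k) \<and> (\<forall>k. p \<le> k \<and> k < p+q \<longrightarrow> xs!Suc k < xs!k)"

definition mk :: "nat \<Rightarrow> nat set \<Rightarrow> nat list" where
  "mk n S = sorted_list_of_set S @ n # rev (sorted_list_of_set ({1..<n} - S))"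

lemma incr_chain:
  assumes "\<forall>k<p. (f::nat\<Rightarrow>nat) k < f (Suc k)" "i < j" "j \<le> p"
  shows "f i < f j"
  using assms(2,3)
proof (induction j)
  case 0 then show ?case by simp
next
  case (Suc j)
  show ?case
  proof (cases "i = j")
    case True then show ?thesis using assms(1) Suc by simp
  next
    case False then have "f i < f j" using Suc by simp
    then show ?thesis using assms(1) Suc by (metis Suc_le_lessD order.strict_trans)
  qed
qed

lemma decr_chain:
  assumes "\<forall>k. p \<le> k \<and> k < m \<longrightarrow> (f::nat\<Rightarrow>nat) (Suc k) < f k" "p \<le> i" "i < j" "j \<le> m"
  shows "f j < f i"
  using assms(3,4)
proof (induction j)
  case 0 then show ?case by simp
next
  case (Suc j)
  show ?case
  proof (cases "i = j")
    case True then show ?thesis using assms(1,2) Suc by simp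
  next
    case False then have "f j < f i" using Suc by simp
    then show ?thesis using assms(1,2) Suc
      by (metis Suc_le_lessD less_Suc_eq order.strict_trans order.strict_trans1 nless_le)
  qed
qed

lemma valid_set:
  assumes "valid n p q xs" shows "set xs = {1..n}"
proof -
  have "card (set xs) = n" using assms distinct_card unfolding valid_def by metis
  then show ?thesis using assms unfolding valid_def
    by (metis card_atLeastAtMost card_subset_eq diff_Suc_1 finite_atLeastAtMost)
qed

lemma valid_peak:
  assumes "valid n p q xs" "n = p+q+1"
  shows "xs!p = n"
proof -
  have "n \<in> set xs" using valid_set[OF assms(1)] assms by auto
  then obtain i where i: "i < n" "xs!i = n" using assms unfolding valid_def by (metis in_set_conv_nth)
  have le: "\<And>j. j < n \<Longrightarrow> xs!j \<le> n" using valid_set[OF assms(1)] assms(1) unfolding valid_def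
    by (metis atLeastAtMost_iff nth_mem)
  show ?thesis
  proof (cases "i < p")
    case True
    then have "xs!i < xs!Suc i" using assms unfolding valid_def by auto
    moreover have "Suc i < n" using True assms by simp
    ultimately show ?thesis using le i by fastforce
  next
    case False
    show ?thesis
    proof (rule ccontr)
      assume "xs!p \<noteq> n"
      then have "i \<noteq> p" using i by auto
      then have "p \<le> i - 1" "i - 1 < p + q" "Suc (i-1) = i" using False i assms by auto
      then have "xs!i < xs!(i-1)" using assms unfolding valid_def by metis
      then show False using le[of "i-1"] i by (simp add: less_imp_diff_less)
    qed
  qed
qed

lemma valid_mk:
  assumes v: "valid n p q xs" and n: "n = p+q+1"
  shows "set (take p xs) \<subseteq> {1..<n}" "card (set (take p xs)) = p" "xs = mk n (set (take p xs))"
proof -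
  have len: "length xs = n" and dist: "distinct xs" using v unfolding valid_def by auto
  have split: "xs = take p xs @ xs!p # drop (Suc p) xs" using id_take_nth_drop[of p xs] len n by simp
  have pk: "xs!p = n" using valid_peak[OF v n] .
  have sx: "set xs = {1..n}" using valid_set[OF v] .
  have d2: "distinct (take p xs @ xs!p # drop (Suc p) xs)" using dist split by metis
  then have disj: "n \<notin> set (take p xs)" "n \<notin> set (drop (Suc p) xs)"
     "set (take p xs) \<inter> set (drop (Suc p) xs) = {}" using pk by auto
  have un: "{1..n} = set (take p xs) \<union> insert n (set (drop (Suc p) xs))"
    using sx split pk by (metis list.simps(15) set_append)
  have "{1..n} = insert n {1..<n}" using n by auto
  then have "insert n {1..<n} = insert n (set (take p xs) \<union> set (drop (Suc p) xs))" using un by simp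
  then have AB: "{1..<n} = set (take p xs) \<union> set (drop (Suc p) xs)"
    using insert_ident[of n "{1..<n}" "set (take p xs) \<union> set (drop (Suc p) xs)"] disj by simp
  show "set (take p xs) \<subseteq> {1..<n}" using AB by blast
  have T1: "set (drop (Suc p) xs) = {1..<n} - set (take p xs)"
    using AB disj(3) by blast
  have ltp: "length (take p xs) = p" using len n by simp
  have dt: "distinct (take p xs)" using dist by simp
  show cS: "card (set (take p xs)) = p" using distinct_card[OF dt] ltp by simp
  have inc: "\<forall>k<p. xs!k < xs!Suc k" using v unfolding valid_def by auto
  have dec: "\<forall>k. p \<le> k \<and> k < p+q \<longrightarrow> xs!Suc k < xs!k" using v unfolding valid_def by auto
  have st: "sorted_wrt (<) (take p xs)"
    unfolding sorted_wrt_iff_nth_less using incr_chain[OF inc] ltp by auto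
  have L: "sorted_list_of_set (set (take p xs)) = take p xs"
    using sorted_list_of_set_unique[of "set (take p xs)" "take p xs"] st cS ltp by simp
  have ld: "length (drop (Suc p) xs) = q" using len n by simp
  have sd: "sorted_wrt (\<lambda>x y. y < x) (drop (Suc p) xs)"
    unfolding sorted_wrt_iff_nth_less using decr_chain[OF dec] ld n len by auto
  have srd: "sorted_wrt (<) (rev (drop (Suc p) xs))" using sd by (simp add: sorted_wrt_rev)
  have dd: "distinct (drop (Suc p) xs)" using dist by simp
  have R: "sorted_list_of_set ({1..<n} - set (take p xs)) = rev (drop (Suc p) xs)"
    using sorted_list_of_set_unique[of "set (rev (drop (Suc p) xs))" "rev (drop (Suc p) xs)"] srd T1
      distinct_card[OF dd] by simp
  show "xs = mk n (set (take p xs))" unfolding mk_def L R using split pk by simp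
qed

lemma mk_valid:
  assumes S: "S \<subseteq> {1..<n}" "card S = p" and n: "n = p+q+1"
  shows "valid n p q (mk n S)" "set (take p (mk n S)) = S"
proof -
  define L where "L = sorted_list_of_set S"
  define T where "T = {1..<n} - S"
  define R where "R = rev (sorted_list_of_set T)"
  have fS: "finite S" using S finite_subset by blast
  have fT: "finite T" unfolding T_def by simp
  have cT: "card T = q" unfolding T_def using S n by (simp add: card_Diff_subset fS)
  have lL: "length L = p" unfolding L_def using S by simp
  have lR: "length R = q" unfolding R_def using cT by simp
  have sL: "set L = S" unfolding L_def using fS by simp
  have sR: "set R = T" unfolding R_def using fT by simp
  have dL: "distinct L" unfolding L_def by simp
  have dR: "distinct R" unfolding R_def by simp
  have stL: "sorted_wrt (<) L" unfolding L_def by simp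
  have stR: "sorted_wrt (\<lambda>x y. y < x) R" unfolding R_def by (simp add: sorted_wrt_rev)
  have m: "mk n S = L @ n # R" unfolding mk_def L_def R_def T_def by simp
  have Sn: "\<forall>x\<in>S. x < n \<and> 1 \<le> x" using S by auto
  have Tn: "\<forall>x\<in>T. x < n \<and> 1 \<le> x" unfolding T_def by auto
  have ST: "S \<inter> T = {}" unfolding T_def by auto
  show "set (take p (mk n S)) = S" using m lL sL by simp
  show "valid n p q (mk n S)"
    unfolding valid_def m
  proof (intro conjI allI impI)
    show "length (L @ n # R) = n" using lL lR n by simp
    have nL: "n \<notin> set L" using sL Sn by blast
    have nR: "n \<notin> set R" using sR Tn by blast
    have LR: "set L \<inter> set R = {}" using sL sR ST by simp
    show "distinct (L @ n # R)" using dL dR nL nR LR by simp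
    have "set L \<subseteq> {1..n}" using sL Sn by fastforce
    moreover have "set R \<subseteq> {1..n}" using sR Tn by fastforce
    moreover have "n \<in> {1..n}" using n by simp
    ultimately show "set (L @ n # R) \<subseteq> {1..n}" by simp
  next
    fix k assume k: "k < p"
    show "(L @ n # R) ! k < (L @ n # R) ! Suc k"
    proof (cases "Suc k < p")
      case True
      then show ?thesis using stL lL k by (simp add: nth_append sorted_wrt_nth_less)
    next
      case False
      then have "Suc k = p" using k by simp
      moreover have "L!k \<in> S" using sL lL k nth_mem by blast
      ultimately show ?thesis using lL k Sn by (simp add: nth_append)
    qed
  next
    fix k assume k: "p \<le> k \<and> k < p + q"
    show "(L @ n # R) ! Suc k < (L @ n # R) ! k"
    proof (cases "k = p")
      case True
      have "0 < length R" using lR k True by simp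
      then have "R!0 \<in> T" using sR nth_mem by blast
      then show ?thesis using True lL Tn by (simp add: nth_append)
    next
      case False
      then obtain j where j: "k = p + Suc j" using k
        by (metis add_Suc_right le_add_diff_inverse le_neq_implies_less less_imp_Suc_add)
      then have "Suc j < q" using k by simp
      then have "R ! Suc j < R ! j" using sorted_wrt_nth_less[OF stR, of j "Suc j"] lR by simp
      then show ?thesis using j lL by (simp add: nth_append)
    qed
  qed
qed

lemma idx_take:
  assumes "distinct xs" "i < length xs"
  shows "xs!i \<in> set (take p xs) \<longleftrightarrow> i < p"
proof
  assume "xs!i \<in> set (take p xs)"
  then obtain j where j: "j < length (take p xs)" "take p xs ! j = xs ! i" by (metis in_set_conv_nth)
  then have "xs!j = xs!i" "j < length xs" "j < p" by auto
  then have "j = i" using assms nth_eq_iff_index_eq by blast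
  then show "i < p" using j by simp
next
  assume "i < p" then show "xs!i \<in> set (take p xs)" using assms
    by (metis in_set_conv_nth length_take min_less_iff_conj nth_take)
qed

lemma arcs_char:
  assumes v: "valid n p q xs" and n: "n = p+q+1" and x: "1 \<le> x" "Suc x < n"
  shows "(x, Suc x) \<in> path_arcs xs \<longleftrightarrow> (x \<in> set (take p xs) \<longleftrightarrow> Suc x \<in> set (take p xs))"
proof -
  have len: "length xs = n" and dist: "distinct xs" using v unfolding valid_def by auto
  have inc: "\<forall>k<p. xs!k < xs!Suc k" using v unfolding valid_def by auto
  have dec: "\<forall>k. p \<le> k \<and> k < p+q \<longrightarrow> xs!Suc k < xs!k" using v unfolding valid_def by auto
  have pk: "xs!p = n" using valid_peak[OF v n] .
  have sx: "set xs = {1..n}" using valid_set[OF v] .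
  let ?S = "set (take p xs)"
  show ?thesis
  proof
    assume "(x, Suc x) \<in> path_arcs xs"
    then obtain k where k: "Suc k < length xs" "x = min (xs!k) (xs!Suc k)" "Suc x = max (xs!k) (xs!Suc k)"
      unfolding path_arcs_def by auto
    have "xs!k \<le> Suc x" "xs!Suc k \<le> Suc x" using k(3) by simp_all
    then have ne: "xs!k \<noteq> n" "xs!Suc k \<noteq> n" using x by auto
    then have "k \<noteq> p" "Suc k \<noteq> p" using pk by auto
    then have side: "k < p \<longleftrightarrow> Suc k < p" by auto
    have "xs!k \<in> ?S \<longleftrightarrow> xs!Suc k \<in> ?S"
      using idx_take[OF dist, of k p] idx_take[OF dist, of "Suc k" p] k(1) side by simp
    then show "x \<in> ?S \<longleftrightarrow> Suc x \<in> ?S" using k by (metis max_def min_def)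
  next
    assume h: "x \<in> ?S \<longleftrightarrow> Suc x \<in> ?S"
    have "x \<in> set xs" "Suc x \<in> set xs" using sx x by auto
    then obtain i j where ij: "i < n" "xs!i = x" "j < n" "xs!j = Suc x" using len by (metis in_set_conv_nth)
    have iS: "x \<in> ?S \<longleftrightarrow> i < p" using idx_take[OF dist, of i p] ij len by simp
    have jS: "Suc x \<in> ?S \<longleftrightarrow> j < p" using idx_take[OF dist, of j p] ij len by simp
    have mem: "\<And>k. Suc k < n \<Longrightarrow> (min (xs!k) (xs!Suc k), max (xs!k) (xs!Suc k)) \<in> path_arcs xs"
      unfolding path_arcs_def using len by auto
    show "(x, Suc x) \<in> path_arcs xs"
    proof (cases "i < p")
      case True
      then have jp: "j < p" using h iS jS by simp
      have "\<not> j < i" using incr_chain[OF inc, of j i] True ij by auto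
      moreover have "i \<noteq> j" using ij by auto
      ultimately have ilj: "i < j" by simp
      have "\<not> Suc i < j"
      proof
        assume "Suc i < j"
        then have "xs!i < xs!Suc i" "xs!Suc i < xs!j" using incr_chain[OF inc] jp by auto
        then show False using ij by simp
      qed
      then have "j = Suc i" using ilj by simp
      then show ?thesis using mem[of i] ij by simp
    next
      case False
      then have jp: "\<not> j < p" using h iS jS by simp
      have "i \<noteq> p" "j \<noteq> p" using ij pk x by auto
      then have ip: "p < i" "p < j" using False jp by auto
      have le: "i \<le> p+q" "j \<le> p+q" using ij n by auto
      have "\<not> i < j" using decr_chain[OF dec, of i j] ip le ij by auto
      moreover have "i \<noteq> j" using ij by auto
      ultimately have jli: "j < i" by simp
      have "\<not> Suc j < i"
      proof
        assume "Suc j < i"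
        then have "xs!Suc j < xs!j" "xs!i < xs!Suc j" using decr_chain[OF dec] ip le by auto
        then show False using ij by simp
      qed
      then have "i = Suc j" using jli by simp
      then show ?thesis using mem[of j] ij by simp
    qed
  qed
qed

lemma subset_det:
  assumes S: "S \<subseteq> {1..<n}" "card S = p" and S': "S' \<subseteq> {1..<n}" "card S' = p"
    and n: "n = p+q+1" and pq: "p \<noteq> q"
    and C: "\<And>x. 1 \<le> x \<Longrightarrow> Suc x < n \<Longrightarrow> ((x\<in>S \<longleftrightarrow> Suc x\<in>S) \<longleftrightarrow> (x\<in>S' \<longleftrightarrow> Suc x\<in>S'))"
  shows "S = S'"
proof -
  have ind: "Suc d < n \<Longrightarrow> ((Suc d \<in> S \<longleftrightarrow> Suc d \<in> S') \<longleftrightarrow> (1\<in>S \<longleftrightarrow> 1\<in>S'))" for d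
  proof (induction d)
    case 0 then show ?case by simp
  next
    case (Suc d)
    then have "Suc d < n" by simp
    then have IH: "(Suc d \<in> S \<longleftrightarrow> Suc d \<in> S') \<longleftrightarrow> (1\<in>S \<longleftrightarrow> 1\<in>S')" using Suc.IH by simp
    have "(Suc d\<in>S \<longleftrightarrow> Suc (Suc d)\<in>S) \<longleftrightarrow> (Suc d\<in>S' \<longleftrightarrow> Suc (Suc d)\<in>S')"
      using C[of "Suc d"] Suc.prems by simp
    then show ?case using IH by blast
  qed
  have all: "y \<in> {1..<n} \<Longrightarrow> ((y \<in> S \<longleftrightarrow> y \<in> S') \<longleftrightarrow> (1\<in>S \<longleftrightarrow> 1\<in>S'))" for y
    using ind[of "y - 1"] by simp
  show ?thesis
  proof (cases "1\<in>S \<longleftrightarrow> 1\<in>S'")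
    case True
    then have "\<forall>y\<in>{1..<n}. y \<in> S \<longleftrightarrow> y \<in> S'" using all by blast
    then show ?thesis using S S' by blast
  next
    case False
    then have "\<forall>y\<in>{1..<n}. y \<in> S' \<longleftrightarrow> y \<notin> S" using all by blast
    then have "S' = {1..<n} - S" using S' by blast
    then have "card S' = (n - 1) - p" using S by (simp add: card_Diff_subset finite_subset)
    then show ?thesis using S' n pq by simp
  qed
qed

lemma pos_case:
  assumes p: "0 < p" and q: "0 < q" and pq: "p \<noteq> q" and n: "n = p+q+1"
  shows "card (type_P_paths n (int p) (- int q)) = (n - 1) choose p"
proof -
  have tv: "type_P_seq n (int p) (- int q) xs \<longleftrightarrow> valid n p q xs" for xs
    unfolding type_P_seq_def valid_def step_ok_def using p q n by auto
  define Subs where "Subs = {S. S \<subseteq> {1..<n} \<and> card S = p}"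
  have V: "{xs. valid n p q xs} = mk n ` Subs"
  proof
    show "{xs. valid n p q xs} \<subseteq> mk n ` Subs"
    proof
      fix xs assume "xs \<in> {xs. valid n p q xs}"
      then have v: "valid n p q xs" by simp
      show "xs \<in> mk n ` Subs" unfolding Subs_def using valid_mk[OF v n] by blast
    qed
    show "mk n ` Subs \<subseteq> {xs. valid n p q xs}" unfolding Subs_def using mk_valid n by blast
  qed
  have TP: "type_P_paths n (int p) (- int q) = path_arcs ` mk n ` Subs"
    unfolding type_P_paths_def tv V[symmetric] by blast
  have inj: "inj_on (\<lambda>S. path_arcs (mk n S)) Subs"
  proof (rule inj_onI)
    fix S S' assume SS: "S \<in> Subs" "S' \<in> Subs" and eq: "path_arcs (mk n S) = path_arcs (mk n S')"
    have S1: "S \<subseteq> {1..<n}" "card S = p" and S2: "S' \<subseteq> {1..<n}" "card S' = p" using SS unfolding Subs_def by auto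
    show "S = S'"
    proof (rule subset_det[OF S1 S2 n pq])
      fix x assume x: "1 \<le> x" "Suc x < n"
      show "(x\<in>S \<longleftrightarrow> Suc x\<in>S) \<longleftrightarrow> (x\<in>S' \<longleftrightarrow> Suc x\<in>S')"
        using arcs_char[OF mk_valid(1)[OF S1 n] n x] arcs_char[OF mk_valid(1)[OF S2 n] n x]
          mk_valid(2)[OF S1 n] mk_valid(2)[OF S2 n] eq by simp
    qed
  qed
  have "card (type_P_paths n (int p) (- int q)) = card Subs"
    unfolding TP image_image using card_image[OF inj] by simp
  also have "\<dots> = (n - 1) choose p" unfolding Subs_def using n_subsets[of "{1..<n}" p] by simp
  finally show ?thesis .
qed

lemma step_refl:
  assumes "u \<le> n" "w \<le> n"
  shows "step_ok (-a) (Suc n - u) (Suc n - w) \<longleftrightarrow> step_ok a u w"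
  unfolding step_ok_def using assms by auto

lemma refl_seq:
  assumes s: "set xs \<subseteq> {1..n}" and t: "type_P_seq n a1 a2 xs"
  shows "type_P_seq n (-a1) (-a2) (map (\<lambda>x. Suc n - x) xs)"
proof -
  have len: "length xs = nat \<bar>a1\<bar> + nat \<bar>a2\<bar> + 1" using t unfolding type_P_seq_def by simp
  have inj: "inj_on (\<lambda>x. Suc n - x) {1..n}" by (rule inj_onI) auto
  have d: "distinct (map (\<lambda>x. Suc n - x) xs)" using t s inj unfolding type_P_seq_def
    by (simp add: distinct_map inj_on_subset)
  have st: "set (map (\<lambda>x. Suc n - x) xs) \<subseteq> {1..n}"
  proof
    fix y assume "y \<in> set (map (\<lambda>x. Suc n - x) xs)"
    then obtain x where x: "x \<in> set xs" "y = Suc n - x" by auto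
    then have "1 \<le> x" "x \<le> n" using s by auto
    then show "y \<in> {1..n}" using x by (simp only: atLeastAtMost_iff) linarith
  qed
  have bnd: "\<And>k. k < length xs \<Longrightarrow> xs!k \<le> n" using s by (meson atLeastAtMost_iff nth_mem subsetD)
  have s1: "\<forall>k < nat \<bar>-a1\<bar>. step_ok (-a1) (map (\<lambda>x. Suc n - x) xs ! k) (map (\<lambda>x. Suc n - x) xs ! Suc k)"
  proof (intro allI impI)
    fix k assume k: "k < nat \<bar>-a1\<bar>"
    then have "Suc k < length xs" using len by simp
    then show "step_ok (-a1) (map (\<lambda>x. Suc n - x) xs ! k) (map (\<lambda>x. Suc n - x) xs ! Suc k)"
      using step_refl[OF bnd bnd, of k "Suc k" a1] t k unfolding type_P_seq_def by simp
  qed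
  have s2: "\<forall>k. nat \<bar>-a1\<bar> \<le> k \<and> k < nat \<bar>-a1\<bar> + nat \<bar>-a2\<bar> \<longrightarrow>
      step_ok (-a2) (map (\<lambda>x. Suc n - x) xs ! k) (map (\<lambda>x. Suc n - x) xs ! Suc k)"
  proof (intro allI impI)
    fix k assume k: "nat \<bar>-a1\<bar> \<le> k \<and> k < nat \<bar>-a1\<bar> + nat \<bar>-a2\<bar>"
    then have "Suc k < length xs" using len by simp
    then show "step_ok (-a2) (map (\<lambda>x. Suc n - x) xs ! k) (map (\<lambda>x. Suc n - x) xs ! Suc k)"
      using step_refl[OF bnd bnd, of k "Suc k" a2] t k unfolding type_P_seq_def by simp
  qed
  show ?thesis unfolding type_P_seq_def using t d st s1 s2 len
    unfolding type_P_seq_def by (simp add: mult.commute)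
qed

lemma refl_arcs:
  assumes s: "set xs \<subseteq> {1..n}"
  shows "path_arcs (map (\<lambda>x. Suc n - x) xs) = (\<lambda>(a,b). (Suc n - b, Suc n - a)) ` path_arcs xs"
proof -
  have bnd: "\<And>k. k < length xs \<Longrightarrow> xs!k \<le> n" using s by (meson atLeastAtMost_iff nth_mem subsetD)
  have e: "Suc k < length xs \<Longrightarrow>
     (min (Suc n - xs!k) (Suc n - xs!Suc k), max (Suc n - xs!k) (Suc n - xs!Suc k)) =
     (Suc n - max (xs!k) (xs!Suc k), Suc n - min (xs!k) (xs!Suc k))" for k
    using bnd[of k] bnd[of "Suc k"] by (auto simp: min_def max_def)
  show ?thesis
  proof
    show "path_arcs (map (\<lambda>x. Suc n - x) xs) \<subseteq> (\<lambda>(a,b). (Suc n - b, Suc n - a)) ` path_arcs xs"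
    proof
      fix e assume "e \<in> path_arcs (map (\<lambda>x. Suc n - x) xs)"
      then obtain k where k: "Suc k < length xs"
        "e = (min (Suc n - xs!k) (Suc n - xs!Suc k), max (Suc n - xs!k) (Suc n - xs!Suc k))"
        unfolding path_arcs_def by auto
      have "(min (xs!k) (xs!Suc k), max (xs!k) (xs!Suc k)) \<in> path_arcs xs"
        unfolding path_arcs_def using k(1) by blast
      then show "e \<in> (\<lambda>(a,b). (Suc n - b, Suc n - a)) ` path_arcs xs"
        using k e[OF k(1)] by (intro rev_image_eqI) auto
    qed
    show "(\<lambda>(a,b). (Suc n - b, Suc n - a)) ` path_arcs xs \<subseteq> path_arcs (map (\<lambda>x. Suc n - x) xs)"
    proof
      fix e assume "e \<in> (\<lambda>(a,b). (Suc n - b, Suc n - a)) ` path_arcs xs"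
      then obtain k where k: "Suc k < length xs"
        "e = (Suc n - max (xs!k) (xs!Suc k), Suc n - min (xs!k) (xs!Suc k))"
        unfolding path_arcs_def by auto
      have "(min (map (\<lambda>x. Suc n - x) xs!k) (map (\<lambda>x. Suc n - x) xs!Suc k),
             max (map (\<lambda>x. Suc n - x) xs!k) (map (\<lambda>x. Suc n - x) xs!Suc k))
            \<in> path_arcs (map (\<lambda>x. Suc n - x) xs)"
        unfolding path_arcs_def mem_Collect_eq using k(1) by (rule_tac x=k in exI) simp
      then show "e \<in> path_arcs (map (\<lambda>x. Suc n - x) xs)" using k e[OF k(1)] by simp
    qed
  qed
qed

lemma paths_box:
  assumes "A \<in> type_P_paths n a1 a2"
  shows "A \<subseteq> {1..n} \<times> {1..n}"
proof
  fix e assume e: "e \<in> A"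
  obtain xs where xs: "A = path_arcs xs" "type_P_seq n a1 a2 xs" using assms unfolding type_P_paths_def by auto
  have s: "set xs \<subseteq> {1..n}" using xs(2) unfolding type_P_seq_def by simp
  obtain k where k: "Suc k < length xs" "e = (min (xs!k) (xs!Suc k), max (xs!k) (xs!Suc k))"
    using e xs(1) unfolding path_arcs_def by auto
  have "xs!k \<in> {1..n}" "xs!Suc k \<in> {1..n}" using k(1) s nth_mem by (metis Suc_lessD subsetD)+
  then show "e \<in> {1..n} \<times> {1..n}" using k(2) by (simp add: min_def max_def)
qed

lemma refl_involution:
  assumes "set xs \<subseteq> {1..n}"
  shows "map (\<lambda>x. Suc n - x) (map (\<lambda>x. Suc n - x) xs) = xs"
proof -
  have "\<forall>x\<in>set xs. Suc n - (Suc n - x) = x" using assms by auto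
  then show ?thesis by (simp add: map_idI)
qed

lemma neg_case:
  "card (type_P_paths n a1 a2) = card (type_P_paths n (-a1) (-a2))"
proof -
  define g where "g = (\<lambda>(a::nat,b::nat). (Suc n - b, Suc n - a))"
  define G where "G = (\<lambda>A. g ` A)"
  have eq: "type_P_paths n a1 a2 = G ` type_P_paths n (-a1) (-a2)"
  proof
    show "type_P_paths n a1 a2 \<subseteq> G ` type_P_paths n (-a1) (-a2)"
    proof
      fix A assume "A \<in> type_P_paths n a1 a2"
      then obtain xs where xs: "A = path_arcs xs" "type_P_seq n a1 a2 xs" unfolding type_P_paths_def by auto
      have s: "set xs \<subseteq> {1..n}" using xs(2) unfolding type_P_seq_def by simp
      define ys where "ys = map (\<lambda>x. Suc n - x) xs"
      have ty: "type_P_seq n (-a1) (-a2) ys" unfolding ys_def using refl_seq[OF s xs(2)] .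
      have sy: "set ys \<subseteq> {1..n}" using ty unfolding type_P_seq_def by simp
      have "map (\<lambda>x. Suc n - x) ys = xs" unfolding ys_def using refl_involution[OF s] .
      then have "A = G (path_arcs ys)" using xs(1) refl_arcs[OF sy] unfolding G_def g_def by simp
      moreover have "path_arcs ys \<in> type_P_paths n (-a1) (-a2)" using ty unfolding type_P_paths_def by blast
      ultimately show "A \<in> G ` type_P_paths n (-a1) (-a2)" by blast
    qed
    show "G ` type_P_paths n (-a1) (-a2) \<subseteq> type_P_paths n a1 a2"
    proof
      fix B assume "B \<in> G ` type_P_paths n (-a1) (-a2)"
      then obtain ys where ys: "B = G (path_arcs ys)" "type_P_seq n (-a1) (-a2) ys"
        unfolding type_P_paths_def by auto
      have sy: "set ys \<subseteq> {1..n}" using ys(2) unfolding type_P_seq_def by simp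
      have ty: "type_P_seq n a1 a2 (map (\<lambda>x. Suc n - x) ys)" using refl_seq[OF sy ys(2)] by simp
      have "B = path_arcs (map (\<lambda>x. Suc n - x) ys)" using ys(1) refl_arcs[OF sy] unfolding G_def g_def by simp
      then show "B \<in> type_P_paths n a1 a2" using ty unfolding type_P_paths_def by blast
    qed
  qed
  have inj: "inj_on G (type_P_paths n (-a1) (-a2))"
  proof (rule inj_on_inverseI)
    fix A assume A: "A \<in> type_P_paths n (-a1) (-a2)"
    have box: "A \<subseteq> {1..n} \<times> {1..n}" using paths_box[OF A] .
    have "\<forall>e\<in>A. g (g e) = e" using box unfolding g_def by auto
    then show "G (G A) = A" unfolding G_def image_image by simp
  qed
  show ?thesis using eq card_image[OF inj] by simp
qed

theorem proposition2:
  fixes n :: nat and a1 a2 :: int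
  assumes "a1 * a2 < 0"
    and "\<bar>a1\<bar> \<noteq> \<bar>a2\<bar>"
    and "\<bar>a1\<bar> + \<bar>a2\<bar> = int n - 1"
  shows "card (type_P_paths n a1 a2) = (n - 1) choose (nat \<bar>a1\<bar>)"
proof -
  have ne: "a1 \<noteq> 0" "a2 \<noteq> 0" using assms(1) by auto
  define p where "p = nat \<bar>a1\<bar>"
  define q where "q = nat \<bar>a2\<bar>"
  have pq: "0 < p" "0 < q" "p \<noteq> q" using ne assms(2) unfolding p_def q_def by auto
  have n: "n = p+q+1" using assms(3) ne unfolding p_def q_def by linarith
  show ?thesis
  proof (cases "a1 > 0")
    case True
    then have "a2 < 0" using assms(1) by (simp add: mult_less_0_iff)
    then have "a1 = int p" "a2 = - int q" using True unfolding p_def q_def by auto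
    then have "type_P_paths n a1 a2 = type_P_paths n (int p) (- int q)" by simp
    then show ?thesis using pos_case[OF pq n] p_def[symmetric] by simp
  next
    case False
    then have "a1 < 0" using ne by simp
    then have "a2 > 0" using assms(1) by (simp add: mult_less_0_iff)
    then have "-a1 = int p" "-a2 = - int q" using \<open>a1 < 0\<close> unfolding p_def q_def by auto
    then have "type_P_paths n (-a1) (-a2) = type_P_paths n (int p) (- int q)" by simp
    then show ?thesis using pos_case[OF pq n] neg_case[of n a1 a2] p_def[symmetric] by simp
  qed
qed

end
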